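(* Under the setting described in the context (conditions (V), (S), (C), compactly supported initial measure $\mu_0$, lattice approximate solution $\mu^N_t$), there is a constant $C$, independent of $l$ and $N$, such that $\|s[\mu^N_{t_l}]\|_{BL^*}\le C$ for all $l$ and $N$.
   Context: $\mathcal{M}^+(\mathbb{R}^k)$: finite nonnegative Borel measures; $\|f\|_{BL}=\max(\sup|f|,\operatorname{Lip}f)$, $\|\mu\|_{BL^*}=\sup\{\int\psi\,d\mu:\|\psi\|_{BL}\le1\}$. Conditions: (V) $V:\mathcal{M}^+(\mathbb{R}^d)\to\mathcal{M}^+(\mathbb{R}^d\times\mathbb{R}^d)$, $\pi_1^{\#}V[\mu]=\mu$; (V1) $\sup_{(x,v)\in\operatorname{supp}V[\mu]}|v|\le C_S(1+\sup_{(x,v)\in\operatorname{supp}V[\mu]}|x|)$; (V2) for each $R'>0$, $\|V[\mu]-V[\nu]\|_{BL^*}\le C_F(R')\|\mu-\nu\|_{BL^*}$ for $\mu,\nu$ supported in $B(0,R')$. (S) $s:\mathcal{M}^+(\mathbb{R}^d)\to\mathcal{M}^+(\mathbb{R}^d)$, (S1) $\|s[\mu]-s[\nu]\|_{BL^*}\le L\|\mu-\nu\|_{BL^*}$, (S2) $\operatorname{supp}s[\mu]\subseteq B(0,R)$ for all $\mu$. (C) $c:\mathbb{R}^d\times\mathcal{M}^+(\mathbb{R}^d)\to\mathbb{R}$, (C1) $|c|\le C_b$, (C2) $|c(x,\mu)-c(y,\nu)|\le C_L(|x-y|+\|\mu-\nu\|_{BL^*})$. Lattice scheme: fix $T>0$;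 $\Delta_N=1/N$; $x_1,\dots,x_I$ enumerate $(N^{-2}\mathbb{Z}^d)\cap[-N,N]^d$, $v_1,\dots,v_J$ enumerate $(N^{-1}\mathbb{Z}^d)\cap[-N,N]^d$; $Q_i=x_i+[0,\Delta_N^2)^d$, $Q'_j=v_j+[0,\Delta_N)^d$; $m_i^x(\mu)=\mu(Q_i)$, $m_{ij}^v(W)=W(Q_i\times Q'_j)$. Time points $t_l=l/N$, $l=0,\dots,M$, with the intervals $[t_l,t_{l+1})$ ($l<M$) and $[t_M,T]$ covering $[0,T]$, each of length at most $\Delta_N$. Set $\mu^N_0=\sum_i m_i^x(\mu_0)\delta_{x_i}$ and for $\tau\in[0,\Delta_N]$: $\mu^N_{t_l+\tau}=\tau\sum_i m_i^x(s[\mu^N_{t_l}])\delta_{x_i}+\sum_{i,j}m_{ij}^v(V[\mu^N_{t_l}])e^{c(x_i,\mu^N_{t_l})\tau}\delta_{x_i+\tau v_j}$. *)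

theory Defs
  imports "HOL-Analysis.Analysis"
begin

definition fin_borel_measures :: "'a::topological_space measure set" where
  "fin_borel_measures = {M. sets M = sets borel \<and> emeasure M UNIV < \<infinity>}"

definition bl_ball :: "('a::metric_space \<Rightarrow> real) set" where
  "bl_ball = {\<psi>. (\<forall>x. \<bar>\<psi> x\<bar> \<le> 1) \<and> 1-lipschitz_on UNIV \<psi>}"

definition bl_norm :: "'a::metric_space measure \<Rightarrow> real" where
  "bl_norm \<mu> = Sup {(\<integral>x. \<psi> x \<partial>\<mu>) | \<psi>. \<psi> \<in> bl_ball}"

definition bl_dist :: "'a::metric_space measure \<Rightarrow> 'a measure \<Rightarrow> real" where
  "bl_dist \<mu> \<nu> = Sup {(\<integral>x. \<psi> x \<partial>\<mu>) - (\<integral>x. \<psi> x \<partial>\<nu>) | \<psi>. \<psi> \<in> bl_ball}"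

definition msupp :: "'a::metric_space measure \<Rightarrow> 'a set" where
  "msupp M = {x. \<forall>e>0. emeasure M (ball x e) \<noteq> 0}"

definition Xlat :: "nat \<Rightarrow> (real^'d) set" where
  "Xlat N = {x. \<forall>k. x$k * (real N)^2 \<in> \<int> \<and> \<bar>x$k\<bar> \<le> real N}"

definition Vlat :: "nat \<Rightarrow> (real^'d) set" where
  "Vlat N = {v. \<forall>k. v$k * real N \<in> \<int> \<and> \<bar>v$k\<bar> \<le> real N}"

definition cubeX :: "nat \<Rightarrow> real^'d \<Rightarrow> (real^'d) set" where
  "cubeX N x = {y. \<forall>k. x$k \<le> y$k \<and> y$k < x$k + 1 / (real N)^2}"

definition cubeV :: "nat \<Rightarrow> real^'d \<Rightarrow> (real^'d) set" where
  "cubeV N v = {w. \<forall>k. v$k \<le> w$k \<and> w$k < v$k + 1 / real N}"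

definition lat_init :: "nat \<Rightarrow> (real^'d) measure \<Rightarrow> (real^'d) measure" where
  "lat_init N \<mu> = measure_of UNIV (sets borel)
     (\<lambda>A. ennreal (\<Sum>x\<in>Xlat N. measure \<mu> (cubeX N x) * indicator A x))"

definition lat_step ::
  "((real^'d) measure \<Rightarrow> (real^'d) measure) \<Rightarrow>
   ((real^'d) measure \<Rightarrow> ((real^'d) \<times> (real^'d)) measure) \<Rightarrow>
   (real^'d \<Rightarrow> (real^'d) measure \<Rightarrow> real) \<Rightarrow> nat \<Rightarrow>
   (real^'d) measure \<Rightarrow> real \<Rightarrow> (real^'d) measure" where
  "lat_step s V c N \<mu> \<tau> = measure_of UNIV (sets borel)
     (\<lambda>A. ennreal (\<tau> * (\<Sum>x\<in>Xlat N. measure (s \<mu>) (cubeX N x) * indicator A x)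
        + (\<Sum>(x, v)\<in>Xlat N \<times> Vlat N.
             measure (V \<mu>) (cubeX N x \<times> cubeV N v) * exp (c x \<mu> * \<tau>)
               * indicator A (x + \<tau> *\<^sub>R v))))"

text \<open>mu_lat s V c mu0 N l = mu^N_{t_l}, with t_l = l/N and step length Delta_N = 1/N.\<close>
primrec mu_lat ::
  "((real^'d) measure \<Rightarrow> (real^'d) measure) \<Rightarrow>
   ((real^'d) measure \<Rightarrow> ((real^'d) \<times> (real^'d)) measure) \<Rightarrow>
   (real^'d \<Rightarrow> (real^'d) measure \<Rightarrow> real) \<Rightarrow>
   (real^'d) measure \<Rightarrow> nat \<Rightarrow> nat \<Rightarrow> (real^'d) measure" where
  "mu_lat s V c \<mu>0 N 0 = lat_init N \<mu>0"
| "mu_lat s V c \<mu>0 N (Suc l) = lat_step s V c N (mu_lat s V c \<mu>0 N l) (1 / real N)"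

end

theory Submission
  imports Defs
begin

lemma cubeX_borel: "cubeX N x \<in> sets borel"
proof -
  have "cubeX N x = {y. \<forall>k\<in>UNIV. x$k \<le> y$k \<and> y$k < x$k + 1 / (real N)^2}"
    by (simp add: cubeX_def)
  also have "\<dots> \<in> sets borel" by measurable
  finally show ?thesis .
qed

lemma cubeV_borel: "cubeV N x \<in> sets borel"
proof -
  have "cubeV N x = {y. \<forall>k\<in>UNIV. x$k \<le> y$k \<and> y$k < x$k + 1 / real N}"
    by (simp add: cubeV_def)
  also have "\<dots> \<in> sets borel" by measurable
  finally show ?thesis .
qed

lemma cubeXV_borel: "cubeX N x \<times> cubeV N v \<in> sets (borel :: ((real^'d) \<times> (real^'d)) measure)"
proof -
  have "cubeX N x \<times> cubeV N v \<in> sets (borel \<Otimes>\<^sub>M borel :: ((real^'d) \<times> (real^'d)) measure)"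
    using cubeX_borel cubeV_borel by (rule pair_measureI)
  then show ?thesis by (simp only: borel_prod)
qed

lemma grid_disj:
  fixes a b z e :: real
  assumes "a * q \<in> \<int>" "b * q \<in> \<int>" "e = 1 / q" "a \<noteq> b"
    "a \<le> z" "z < a + e" "b \<le> z" "z < b + e" "q \<ge> 0"
  shows False
proof (cases "q = 0")
  case True then show ?thesis using assms by simp
next
  case False
  obtain i where i: "a * q = of_int i" using assms(1) Ints_cases by blast
  obtain j where j: "b * q = of_int j" using assms(2) Ints_cases by blast
  have "i \<noteq> j" using i j assms(4) False by (metis mult_right_cancel of_int_eq_iff)
  have "\<bar>a - b\<bar> < e" using assms by auto
  hence "\<bar>a - b\<bar> * \<bar>q\<bar> < e * \<bar>q\<bar>" using False by simp
  moreover have "\<bar>a*q - b*q\<bar> = \<bar>a - b\<bar> * q" using assms(9) by (simp add: left_diff_distrib[symmetric] abs_mult)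
  ultimately have "\<bar>a*q - b*q\<bar> < 1" using False assms(3) assms(9) by simp
  hence "\<bar>real_of_int (i - j)\<bar> < 1" using i j by simp
  hence "\<bar>i - j\<bar> < 1" by linarith
  thus False using \<open>i \<noteq> j\<close> by simp
qed

lemma cubeX_disj: "x \<in> Xlat N \<Longrightarrow> y \<in> Xlat N \<Longrightarrow> x \<noteq> y \<Longrightarrow> cubeX N x \<inter> cubeX N y = {}"
proof (rule ccontr)
  assume a: "x \<in> Xlat N" "y \<in> Xlat N" "x \<noteq> y" "cubeX N x \<inter> cubeX N y \<noteq> {}"
  then obtain k where k: "x$k \<noteq> y$k" by (metis vec_eq_iff)
  from a obtain z where z: "z \<in> cubeX N x" "z \<in> cubeX N y" by blast
  show False
    apply (rule grid_disj[of "x$k" "(real N)^2" "y$k" "1/(real N)^2" "z$k"])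
    using a k z by (auto simp: Xlat_def cubeX_def)
qed

lemma cubeV_disj: "x \<in> Vlat N \<Longrightarrow> y \<in> Vlat N \<Longrightarrow> x \<noteq> y \<Longrightarrow> cubeV N x \<inter> cubeV N y = {}"
proof (rule ccontr)
  assume a: "x \<in> Vlat N" "y \<in> Vlat N" "x \<noteq> y" "cubeV N x \<inter> cubeV N y \<noteq> {}"
  then obtain k where k: "x$k \<noteq> y$k" by (metis vec_eq_iff)
  from a obtain z where z: "z \<in> cubeV N x" "z \<in> cubeV N y" by blast
  show False
    apply (rule grid_disj[of "x$k" "real N" "y$k" "1/real N" "z$k"])
    using a k z by (auto simp: Vlat_def cubeV_def)
qed

lemma FB_space: "M \<in> fin_borel_measures \<Longrightarrow> space M = UNIV"
  using sets_eq_imp_space_eq[of M borel] by (simp add: fin_borel_measures_def)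

lemma sum_disj_le:
  fixes M :: "'a::topological_space measure"
  assumes M: "M \<in> fin_borel_measures" and A: "\<And>i. i \<in> I \<Longrightarrow> A i \<in> sets borel"
    and dj: "disjoint_family_on A I"
  shows "(\<Sum>i\<in>I. measure M (A i)) \<le> measure M UNIV"
proof (cases "finite I")
  case False then show ?thesis by simp
next
  case True
  have sp: "space M = UNIV" using M by (rule FB_space)
  interpret finite_measure M using M sp by (intro finite_measureI) (auto simp: fin_borel_measures_def)
  have sM: "sets M = sets borel" using M by (simp add: fin_borel_measures_def)
  have "(\<Sum>i\<in>I. measure M (A i)) = measure M (\<Union>i\<in>I. A i)"
    using True A dj sM by (intro finite_measure_finite_Union[symmetric]) auto
  also have "\<dots> \<le> measure M (space M)" by (rule bounded_measure)
  finally show ?thesis using sp by simp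
qed



lemma FB_finite: "M \<in> fin_borel_measures \<Longrightarrow> finite_measure M"
  using FB_space[of M] by (intro finite_measureI) (auto simp: fin_borel_measures_def)

lemma bl_meas: "\<psi> \<in> bl_ball \<Longrightarrow> M \<in> fin_borel_measures \<Longrightarrow> \<psi> \<in> borel_measurable M"
proof -
  assume a: "\<psi> \<in> bl_ball" "M \<in> fin_borel_measures"
  have "continuous_on UNIV \<psi>" using a(1) unfolding bl_ball_def
    using lipschitz_on_continuous_on by blast
  hence "\<psi> \<in> borel_measurable borel" by (rule borel_measurable_continuous_onI)
  moreover have s: "sets M = sets borel" using a(2) by (simp add: fin_borel_measures_def)
  ultimately show ?thesis by (subst measurable_cong_sets[OF s refl])
qed

lemma bl_integrable: "\<psi> \<in> bl_ball \<Longrightarrow> M \<in> fin_borel_measures \<Longrightarrow> integrable M \<psi>"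
proof -
  assume a: "\<psi> \<in> bl_ball" "M \<in> fin_borel_measures"
  interpret finite_measure M using FB_finite[OF a(2)] .
  show ?thesis
    by (rule integrable_const_bound[where B=1]) (use a in \<open>auto simp: bl_ball_def bl_meas\<close>)
qed

lemma bl_int_bound: "\<psi> \<in> bl_ball \<Longrightarrow> M \<in> fin_borel_measures \<Longrightarrow> \<bar>\<integral>x. \<psi> x \<partial>M\<bar> \<le> measure M UNIV"
proof -
  assume a: "\<psi> \<in> bl_ball" "M \<in> fin_borel_measures"
  interpret finite_measure M using FB_finite[OF a(2)] .
  have "\<bar>\<integral>x. \<psi> x \<partial>M\<bar> \<le> (\<integral>x. \<bar>\<psi> x\<bar> \<partial>M)"
    using integral_abs_bound by blast
  also have "\<dots> \<le> (\<integral>x. 1 \<partial>M)"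
    apply (rule integral_mono)
    using a bl_integrable[OF a] by (auto simp: bl_ball_def)
  also have "\<dots> = measure M UNIV" using FB_space[OF a(2)] by simp
  finally show ?thesis .
qed

lemma zero_bl: "(\<lambda>x. 0) \<in> bl_ball" "(\<lambda>x. 1) \<in> bl_ball"
  by (auto simp: bl_ball_def intro: lipschitz_on_le[OF lipschitz_on_constant])

lemma bl_dist_props:
  assumes "M \<in> fin_borel_measures" "N \<in> fin_borel_measures"
  shows "bdd_above {(\<integral>x. \<psi> x \<partial>M) - (\<integral>x. \<psi> x \<partial>N) | \<psi>. \<psi> \<in> bl_ball}"
    and "0 \<le> bl_dist M N"
proof -
  show b: "bdd_above {(\<integral>x. \<psi> x \<partial>M) - (\<integral>x. \<psi> x \<partial>N) | \<psi>. \<psi> \<in> bl_ball}"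
    apply (rule bdd_aboveI[where M="measure M UNIV + measure N UNIV"])
    using bl_int_bound[OF _ assms(1)] bl_int_bound[OF _ assms(2)] by fastforce
  show "0 \<le> bl_dist M N" unfolding bl_dist_def
    apply (rule cSup_upper2[where x=0])
    using zero_bl(1) b by force+
qed

lemma bl_norm_bound:
  assumes "M \<in> fin_borel_measures" "N \<in> fin_borel_measures"
  shows "bl_norm M \<le> bl_dist M N + measure N UNIV"
  unfolding bl_norm_def
proof (rule cSup_least)
  show "{\<integral>x. \<psi> x \<partial>M |\<psi>. \<psi> \<in> bl_ball} \<noteq> {}" using zero_bl by blast
  fix y assume "y \<in> {\<integral>x. \<psi> x \<partial>M |\<psi>. \<psi> \<in> bl_ball}"
  then obtain \<psi> where p: "\<psi> \<in> bl_ball" "y = (\<integral>x. \<psi> x \<partial>M)" by blast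
  have "(\<integral>x. \<psi> x \<partial>M) - (\<integral>x. \<psi> x \<partial>N) \<le> bl_dist M N" unfolding bl_dist_def
    apply (rule cSup_upper[OF _ bl_dist_props(1)[OF assms]])
    using p by blast
  moreover have "(\<integral>x. \<psi> x \<partial>N) \<le> measure N UNIV" using bl_int_bound[OF p(1) assms(2)] by linarith
  ultimately show "y \<le> bl_dist M N + measure N UNIV" using p by linarith
qed

lemma bl_dist_le:
  assumes "M \<in> fin_borel_measures" "N \<in> fin_borel_measures"
  shows "bl_dist M N \<le> measure M UNIV + measure N UNIV"
  unfolding bl_dist_def
proof (rule cSup_least)
  show "{(\<integral>x. \<psi> x \<partial>M) - (\<integral>x. \<psi> x \<partial>N) |\<psi>. \<psi> \<in> bl_ball} \<noteq> {}" using zero_bl by blast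
  fix y assume "y \<in> {(\<integral>x. \<psi> x \<partial>M) - (\<integral>x. \<psi> x \<partial>N) |\<psi>. \<psi> \<in> bl_ball}"
  then obtain \<psi> where p: "\<psi> \<in> bl_ball" "y = (\<integral>x. \<psi> x \<partial>M) - (\<integral>x. \<psi> x \<partial>N)" by blast
  show "y \<le> measure M UNIV + measure N UNIV"
    using p bl_int_bound[OF p(1) assms(1)] bl_int_bound[OF p(1) assms(2)] by linarith
qed

lemma mass_le_bl_norm:
  assumes "M \<in> fin_borel_measures"
  shows "measure M UNIV \<le> bl_norm M"
proof -
  have "bdd_above {\<integral>x. \<psi> x \<partial>M |\<psi>. \<psi> \<in> bl_ball}"
    apply (rule bdd_aboveI[where M="measure M UNIV"])
    using bl_int_bound[OF _ assms] by fastforce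
  moreover have "(\<integral>x. 1 \<partial>M) \<in> {\<integral>x. \<psi> x \<partial>M |\<psi>. \<psi> \<in> bl_ball}" using zero_bl(2) by blast
  ultimately have "(\<integral>x. 1 \<partial>M) \<le> bl_norm M" unfolding bl_norm_def by (rule cSup_upper[rotated])
  thus ?thesis using FB_space[OF assms] by simp
qed

lemma measure_of_FB:
  assumes "f UNIV = ennreal r" "r \<ge> 0"
  shows "measure_of UNIV (sets borel) f \<in> fin_borel_measures"
    and "measure (measure_of UNIV (sets borel) f) UNIV \<le> r"
proof -
  let ?M = "measure_of UNIV (sets borel) f"
  have ss: "sigma_sets UNIV (sets borel) = sets (borel::'a measure)"
    using sets.sigma_sets_eq[of borel] by simp
  have s: "sets ?M = sets borel" by (simp add: sets_measure_of_conv ss)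
  have e: "emeasure ?M UNIV \<le> ennreal r"
    using assms(1) by (simp add: emeasure_measure_of_conv ss)
  show "?M \<in> fin_borel_measures" using s e
    by (auto simp: fin_borel_measures_def intro: le_less_trans)
  have "enn2real (emeasure ?M UNIV) \<le> enn2real (ennreal r)"
    by (rule enn2real_mono[OF e]) simp
  then show "measure ?M UNIV \<le> r" using assms(2) by (simp add: measure_def)
qed


lemma sumX_le:
  assumes "M \<in> fin_borel_measures"
  shows "(\<Sum>x\<in>Xlat N. measure M (cubeX N x)) \<le> measure M UNIV"
  by (rule sum_disj_le[OF assms]) (auto simp: cubeX_borel disjoint_family_on_def cubeX_disj)

lemma sumXV_le:
  fixes M :: "((real^'d) \<times> (real^'d)) measure"
  assumes "M \<in> fin_borel_measures"
  shows "(\<Sum>(x,v)\<in>Xlat N \<times> Vlat N. measure M (cubeX N x \<times> cubeV N v)) \<le> measure M UNIV"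
proof -
  have "(\<Sum>(x,v)\<in>Xlat N \<times> Vlat N. measure M (cubeX N x \<times> cubeV N v))
      = (\<Sum>p\<in>Xlat N \<times> Vlat N. measure M (cubeX N (fst p) \<times> cubeV N (snd p)))"
    by (simp add: case_prod_beta)
  also have "\<dots> \<le> measure M UNIV"
  proof (rule sum_disj_le[OF assms])
    show "disjoint_family_on (\<lambda>p. cubeX N (fst p) \<times> cubeV N (snd p)) (Xlat N \<times> Vlat N)"
      unfolding disjoint_family_on_def
    proof (clarsimp)
      fix a b a' b' assume h: "a \<in> Xlat N" "b \<in> Vlat N" "a' \<in> Xlat N" "b' \<in> Vlat N" "a = a' \<longrightarrow> b \<noteq> b'"
      show "cubeX N a \<times> cubeV N b \<inter> cubeX N a' \<times> cubeV N b' = {}"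
        using h cubeX_disj[of a N a'] cubeV_disj[of b N b'] by blast
    qed
  qed (auto simp: cubeXV_borel)
  finally show ?thesis .
qed

lemma init_FB:
  assumes "\<mu> \<in> fin_borel_measures"
  shows "lat_init N \<mu> \<in> fin_borel_measures" "measure (lat_init N \<mu>) UNIV \<le> measure \<mu> UNIV"
proof -
  let ?r = "\<Sum>x\<in>Xlat N. measure \<mu> (cubeX N x)"
  let ?F = "\<lambda>A. ennreal (\<Sum>x\<in>Xlat N. measure \<mu> (cubeX N x) * indicator A x)"
  have f: "?F UNIV = ennreal ?r"
    by simp
  have r: "?r \<ge> 0" by (simp add: sum_nonneg)
  show "lat_init N \<mu> \<in> fin_borel_measures" unfolding lat_init_def by (rule measure_of_FB(1)[of ?F, OF f r])
  have "measure (lat_init N \<mu>) UNIV \<le> ?r" unfolding lat_init_def by (rule measure_of_FB(2)[of ?F, OF f r])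
  also have "\<dots> \<le> measure \<mu> UNIV" by (rule sumX_le[OF assms])
  finally show "measure (lat_init N \<mu>) UNIV \<le> measure \<mu> UNIV" .
qed

lemma step_FB:
  assumes mu: "\<mu> \<in> fin_borel_measures" and tau: "\<tau> \<ge> 0"
    and sF: "s \<mu> \<in> fin_borel_measures" and VF: "V \<mu> \<in> fin_borel_measures"
    and marg: "distr (V \<mu>) borel fst = \<mu>"
    and cb: "\<And>x. \<bar>c x \<mu>\<bar> \<le> Cb"
  shows "lat_step s V c N \<mu> \<tau> \<in> fin_borel_measures"
    "measure (lat_step s V c N \<mu> \<tau>) UNIV \<le> \<tau> * measure (s \<mu>) UNIV + exp (Cb * \<tau>) * measure \<mu> UNIV"
proof -
  let ?a = "\<Sum>x\<in>Xlat N. measure (s \<mu>) (cubeX N x)"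
  let ?b = "\<Sum>(x, v)\<in>Xlat N \<times> Vlat N. measure (V \<mu>) (cubeX N x \<times> cubeV N v) * exp (c x \<mu> * \<tau>)"
  let ?r = "\<tau> * ?a + ?b"
  let ?F = "\<lambda>A. ennreal (\<tau> * (\<Sum>x\<in>Xlat N. measure (s \<mu>) (cubeX N x) * indicator A x)
        + (\<Sum>(x, v)\<in>Xlat N \<times> Vlat N.
             measure (V \<mu>) (cubeX N x \<times> cubeV N v) * exp (c x \<mu> * \<tau>)
               * indicator A (x + \<tau> *\<^sub>R v)))"
  have f: "?F UNIV = ennreal ?r"
    by simp
  have b0: "?b \<ge> 0" by (rule sum_nonneg) auto
  have r: "?r \<ge> 0" using tau b0 by (simp add: sum_nonneg)
  show "lat_step s V c N \<mu> \<tau> \<in> fin_borel_measures" unfolding lat_step_def by (rule measure_of_FB(1)[of ?F, OF f r])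
  have "measure (lat_step s V c N \<mu> \<tau>) UNIV \<le> ?r" unfolding lat_step_def by (rule measure_of_FB(2)[of ?F, OF f r])
  also have "\<dots> \<le> \<tau> * measure (s \<mu>) UNIV + exp (Cb * \<tau>) * measure \<mu> UNIV"
  proof -
    have 1: "\<tau> * ?a \<le> \<tau> * measure (s \<mu>) UNIV" using tau sumX_le[OF sF] by (rule mult_left_mono[rotated])
    have "?b \<le> (\<Sum>(x, v)\<in>Xlat N \<times> Vlat N. measure (V \<mu>) (cubeX N x \<times> cubeV N v) * exp (Cb * \<tau>))"
    proof (rule sum_mono, clarsimp)
      fix x v
      have "c x \<mu> * \<tau> \<le> Cb * \<tau>" using cb[of x] tau by (intro mult_right_mono) auto
      thus "measure (V \<mu>) (cubeX N x \<times> cubeV N v) * exp (c x \<mu> * \<tau>)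
           \<le> measure (V \<mu>) (cubeX N x \<times> cubeV N v) * exp (Cb * \<tau>)"
        by (intro mult_left_mono) auto
    qed
    also have "\<dots> = exp (Cb * \<tau>) * (\<Sum>(x, v)\<in>Xlat N \<times> Vlat N. measure (V \<mu>) (cubeX N x \<times> cubeV N v))"
      by (simp add: sum_distrib_left case_prod_beta mult.commute)
    also have "\<dots> \<le> exp (Cb * \<tau>) * measure (V \<mu>) UNIV"
      using sumXV_le[OF VF] by (intro mult_left_mono) auto
    also have "measure (V \<mu>) UNIV = measure \<mu> UNIV"
    proof -
      have sV: "sets (V \<mu>) = sets borel" using VF by (simp add: fin_borel_measures_def)
      have "fst \<in> borel_measurable (borel::((real^'d) \<times> (real^'d)) measure)"
        by (intro borel_measurable_continuous_onI continuous_intros)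
      hence m: "fst \<in> measurable (V \<mu>) borel"
        by (subst measurable_cong_sets[OF sV refl])
      have "measure \<mu> UNIV = measure (distr (V \<mu>) borel fst) UNIV" using marg by simp
      also have "\<dots> = measure (V \<mu>) (fst -` UNIV \<inter> space (V \<mu>))" by (rule measure_distr[OF m]) simp
      also have "\<dots> = measure (V \<mu>) UNIV" using FB_space[OF VF] by simp
      finally show ?thesis by simp
    qed
    finally show ?thesis using 1 by linarith
  qed
  finally show "measure (lat_step s V c N \<mu> \<tau>) UNIV \<le> \<tau> * measure (s \<mu>) UNIV + exp (Cb * \<tau>) * measure \<mu> UNIV" .
qed


theorem corollary4p7:
  fixes V :: "(real^'d) measure \<Rightarrow> ((real^'d) \<times> (real^'d)) measure"
    and s :: "(real^'d) measure \<Rightarrow> (real^'d) measure"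
    and c :: "real^'d \<Rightarrow> (real^'d) measure \<Rightarrow> real"
    and \<mu>0 :: "(real^'d) measure"
    and T :: real
  assumes T: "T > 0"
    (* (V) *)
    and V_meas: "\<And>\<mu>. \<mu> \<in> fin_borel_measures \<Longrightarrow> V \<mu> \<in> fin_borel_measures"
    and V_marg: "\<And>\<mu>. \<mu> \<in> fin_borel_measures \<Longrightarrow> distr (V \<mu>) borel fst = \<mu>"
    (* (V1) *)
    and V1: "\<exists>C_S>0. \<forall>\<mu>\<in>fin_borel_measures.
               (SUP p\<in>msupp (V \<mu>). ereal (norm (snd p)))
                 \<le> ereal C_S * (1 + (SUP p\<in>msupp (V \<mu>). ereal (norm (fst p))))"
    (* (V2) *)
    and V2: "\<forall>R'>0. \<exists>C_F. \<forall>\<mu>\<in>fin_borel_measures. \<forall>\<nu>\<in>fin_borel_measures.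
               msupp \<mu> \<subseteq> ball 0 R' \<longrightarrow> msupp \<nu> \<subseteq> ball 0 R' \<longrightarrow>
               bl_dist (V \<mu>) (V \<nu>) \<le> C_F * bl_dist \<mu> \<nu>"
    (* (S) *)
    and S_meas: "\<And>\<mu>. \<mu> \<in> fin_borel_measures \<Longrightarrow> s \<mu> \<in> fin_borel_measures"
    and S1: "\<exists>L. \<forall>\<mu>\<in>fin_borel_measures. \<forall>\<nu>\<in>fin_borel_measures.
               bl_dist (s \<mu>) (s \<nu>) \<le> L * bl_dist \<mu> \<nu>"
    and S2: "\<exists>R. \<forall>\<mu>\<in>fin_borel_measures. msupp (s \<mu>) \<subseteq> ball 0 R"
    (* (C) *)
    and C1: "\<exists>C_b. \<forall>x. \<forall>\<mu>\<in>fin_borel_measures. \<bar>c x \<mu>\<bar> \<le> C_b"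
    and C2: "\<exists>C_L. \<forall>x y. \<forall>\<mu>\<in>fin_borel_measures. \<forall>\<nu>\<in>fin_borel_measures.
               \<bar>c x \<mu> - c y \<nu>\<bar> \<le> C_L * (dist x y + bl_dist \<mu> \<nu>)"
    (* initial datum *)
    and mu0: "\<mu>0 \<in> fin_borel_measures"
    and mu0_cpt: "compact (msupp \<mu>0)"
  shows "\<exists>C. \<forall>N::nat. \<forall>l::nat. N \<ge> 1 \<longrightarrow> real l \<le> T * real N \<longrightarrow>
           bl_norm (s (mu_lat s V c \<mu>0 N l)) \<le> C"
proof -
  obtain L where L: "\<And>\<mu> \<nu>. \<mu> \<in> fin_borel_measures \<Longrightarrow> \<nu> \<in> fin_borel_measures \<Longrightarrow>
      bl_dist (s \<mu>) (s \<nu>) \<le> L * bl_dist \<mu> \<nu>" using S1 by blast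
  obtain Cb where Cb: "\<And>x \<mu>. \<mu> \<in> fin_borel_measures \<Longrightarrow> \<bar>c x \<mu>\<bar> \<le> Cb" using C1 by blast
  have Cb0: "Cb \<ge> 0" using Cb[OF mu0, of 0] by linarith
  define m :: "(real^'d) measure \<Rightarrow> real" where "m = (\<lambda>M. measure M UNIV)"
  have m0: "\<And>M. m M \<ge> 0" by (simp add: m_def)
  define K where "K = \<bar>L\<bar> * m \<mu>0 + m (s \<mu>0)"
  have K0: "K \<ge> 0" using m0 by (simp add: K_def)
  define a where "a = Cb + \<bar>L\<bar>"
  have a0: "a \<ge> 0" using Cb0 by (simp add: a_def)
  have sb: "bl_norm (s \<mu>) \<le> \<bar>L\<bar> * m \<mu> + K" if mu: "\<mu> \<in> fin_borel_measures" for \<mu>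
  proof -
    have "bl_norm (s \<mu>) \<le> bl_dist (s \<mu>) (s \<mu>0) + m (s \<mu>0)"
      unfolding m_def by (rule bl_norm_bound[OF S_meas[OF mu] S_meas[OF mu0]])
    also have "bl_dist (s \<mu>) (s \<mu>0) \<le> L * bl_dist \<mu> \<mu>0" by (rule L[OF mu mu0])
    also have "L * bl_dist \<mu> \<mu>0 \<le> \<bar>L\<bar> * bl_dist \<mu> \<mu>0"
      using bl_dist_props(2)[OF mu mu0] by (intro mult_right_mono) auto
    also have "\<bar>L\<bar> * bl_dist \<mu> \<mu>0 \<le> \<bar>L\<bar> * (m \<mu> + m \<mu>0)"
      using bl_dist_le[OF mu mu0] unfolding m_def by (intro mult_left_mono) auto
    finally show ?thesis by (simp add: K_def algebra_simps)
  qed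
  have ms: "m (s \<mu>) \<le> \<bar>L\<bar> * m \<mu> + K" if mu: "\<mu> \<in> fin_borel_measures" for \<mu>
    using mass_le_bl_norm[OF S_meas[OF mu]] sb[OF mu] unfolding m_def by linarith
  have ind: "mu_lat s V c \<mu>0 N l \<in> fin_borel_measures \<and>
      m (mu_lat s V c \<mu>0 N l) \<le> exp (a * real l / real N) * (m \<mu>0 + K * real l / real N)"
    if N: "N \<ge> 1" for N l
  proof (induction l)
    case 0
    show ?case using init_FB[OF mu0, of N] by (simp add: m_def)
  next
    case (Suc l)
    let ?M = "mu_lat s V c \<mu>0 N l"
    let ?t = "1 / real N"
    have MF: "?M \<in> fin_borel_measures" using Suc by blast
    define E where "E = exp (a * real l / real N)"
    define B where "B = m \<mu>0 + K * real l / real N"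
    have E1: "E \<ge> 1" using a0 by (simp add: E_def)
    have B0: "B \<ge> 0" using m0 K0 by (simp add: B_def)
    have IH: "m ?M \<le> E * B" using Suc by (simp add: E_def B_def)
    have t0: "?t \<ge> 0" by simp
    have st: "mu_lat s V c \<mu>0 N (Suc l) = lat_step s V c N ?M ?t" by simp
    note S = step_FB[of ?M ?t s V c Cb N, OF MF t0 S_meas[OF MF] V_meas[OF MF] V_marg[OF MF] Cb[OF MF]]
    have "m (mu_lat s V c \<mu>0 N (Suc l)) \<le> ?t * m (s ?M) + exp (Cb * ?t) * m ?M"
      using S(2) unfolding st m_def .
    also have "\<dots> \<le> ?t * (\<bar>L\<bar> * m ?M + K) + exp (Cb * ?t) * m ?M"
      using ms[OF MF] by (intro add_right_mono mult_left_mono) auto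
    also have "\<dots> = (exp (Cb * ?t) + \<bar>L\<bar> * ?t) * m ?M + ?t * K" by (simp add: algebra_simps)
    also have "\<dots> \<le> (exp (Cb * ?t) * exp (\<bar>L\<bar> * ?t)) * m ?M + ?t * K"
    proof -
      have e1: "1 \<le> exp (Cb * ?t)" using Cb0 by simp
      have "1 * (\<bar>L\<bar> * ?t) \<le> exp (Cb * ?t) * (\<bar>L\<bar> * ?t)"
        using e1 by (intro mult_right_mono) auto
      hence "exp (Cb * ?t) + \<bar>L\<bar> * ?t \<le> exp (Cb * ?t) * (1 + \<bar>L\<bar> * ?t)"
        by (simp add: distrib_left)
      also have "\<dots> \<le> exp (Cb * ?t) * exp (\<bar>L\<bar> * ?t)"
        by (intro mult_left_mono) (auto simp: exp_ge_add_one_self)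
      finally show ?thesis using m0[of ?M] by (intro add_right_mono mult_right_mono) auto
    qed
    also have "exp (Cb * ?t) * exp (\<bar>L\<bar> * ?t) = exp (a * ?t)"
      by (simp add: a_def algebra_simps add_divide_distrib flip: exp_add)
    also have "exp (a * ?t) * m ?M + ?t * K \<le> exp (a * ?t) * (E * B) + exp (a * ?t) * (E * (?t * K))"
    proof -
      have ea: "1 \<le> exp (a * ?t)" using a0 by simp
      have "1 * 1 \<le> exp (a * ?t) * E" using ea E1 by (intro mult_mono) auto
      hence "exp (a * ?t) * E \<ge> 1" by simp
      hence "1 * (?t * K) \<le> (exp (a * ?t) * E) * (?t * K)" using K0 by (intro mult_right_mono) auto
      hence "?t * K \<le> (exp (a * ?t) * E) * (?t * K)" by simp
      thus ?thesis using IH by (simp add: mult.assoc) (intro add_mono mult_left_mono; simp)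
    qed
    also have "\<dots> = exp (a * real (Suc l) / real N) * (m \<mu>0 + K * real (Suc l) / real N)"
      by (simp add: E_def B_def algebra_simps add_divide_distrib flip: exp_add)
    finally show ?case using S(1) st by simp
  qed
  define C where "C = \<bar>L\<bar> * (exp (a * T) * (m \<mu>0 + K * T)) + K"
  show ?thesis
  proof (intro exI[of _ C] allI impI)
    fix N l :: nat assume N: "N \<ge> 1" and l: "real l \<le> T * real N"
    have Np: "real N > 0" using N by simp
    have lt: "real l / real N \<le> T" using l Np by (simp add: divide_le_eq mult.commute)
    note I = ind[OF N, of l]
    have "m (mu_lat s V c \<mu>0 N l) \<le> exp (a * T) * (m \<mu>0 + K * T)"
    proof -
      have "exp (a * real l / real N) \<le> exp (a * T)"
        using lt a0 by (simp add: mult_left_mono times_divide_eq_right[symmetric] del: times_divide_eq_right)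
      moreover have "m \<mu>0 + K * real l / real N \<le> m \<mu>0 + K * T"
        using lt K0 by (simp add: mult_left_mono times_divide_eq_right[symmetric] del: times_divide_eq_right)
      ultimately show ?thesis using I m0 K0
        by (meson add_nonneg_nonneg divide_nonneg_nonneg exp_ge_zero mult_mono mult_nonneg_nonneg of_nat_0_le_iff order_trans)
    qed
    hence "\<bar>L\<bar> * m (mu_lat s V c \<mu>0 N l) \<le> \<bar>L\<bar> * (exp (a * T) * (m \<mu>0 + K * T))"
      by (intro mult_left_mono) auto
    thus "bl_norm (s (mu_lat s V c \<mu>0 N l)) \<le> C" using sb[of "mu_lat s V c \<mu>0 N l"] I
      by (simp add: C_def)
  qed
qed

end
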